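(* For $N\in\mathbb{Z}$ let $d_N:=\tfrac12(|N|+1)(|N|+2)$ and define elements $\psi^N_{j,k,l}\in\mathcal{A}(S^5_q)$ by $(\psi^N_{j,k,l})^*:=\sqrt{[j,k,l]!}\,z_1^jz_2^kz_3^l$ if $N\geq0$ (with $j+k+l=N$), and $(\psi^N_{j,k,l})^*:=q^{-N+j-l}\sqrt{[j,k,l]!}\,(z_1^jz_2^kz_3^l)^*$ if $N\le 0$ (with $j+k+l=-N$), where $j,k,l\ge 0$. Let $\Psi_N$ be the column vector (of length $d_N$) with components $\psi^N_{j,k,l}$, and $P_N:=\Psi_N\Psi_N^\dagger$. Then $\Psi_N^\dagger\Psi_N=1$, so $P_N$ is a projection ($P_N^2=P_N=P_N^*$) in $M_{d_N}(\mathcal{A}(\mathbb{C}P^2_q))$. Moreover the map $P_N\mathcal{A}(\mathbb{C}P^2_q)^{d_N}\to\Sigma_{0,N}$, $v\mapsto \Psi_N^\dagger v$, is an isomorphism of right $\mathcal{A}(\mathbb{C}P^2_q)$-modules with inverse $a\mapsto \Psi_N a$, and the map $\mathcal{A}(\mathbb{C}P^2_q)^{d_N}P_{-N}\to\Sigma_{0,N}$, $v\mapsto v\Psi_{-N}$ ($v$ a row vector), is an isomorphism of left $\mathcal{A}(\mathbb{C}P^2_q)$-modules with inverse $a\mapsto a\Psi_{-N}^\dagger$.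
   Context: Fix $0<q<1$. $\mathcal{A}(S^5_q)$ is the unital $*$-algebra generated by $z_1,z_2,z_3$ and their adjoints with relations: $z_iz_j=qz_jz_i$ for $i<j$; $z_i^*z_j=qz_jz_i^*$ for $i\neq j$; $[z_1^*,z_1]=0$; $[z_2^*,z_2]=(1-q^2)z_1z_1^*$; $[z_3^*,z_3]=(1-q^2)(z_1z_1^*+z_2z_2^* )$; $z_1z_1^*+z_2z_2^*+z_3z_3^*=1$. These relations are homogeneous for the $\mathbb{Z}$-grading with $\deg z_i=1$, $\deg z_i^*=-1$; $\Sigma_{0,N}$ denotes the homogeneous component of degree $N$, and $\mathcal{A}(\mathbb{C}P^2_q):=\Sigma_{0,0}$ (a $*$-subalgebra, generated by $p_{ij}:=z_i^*z_j$); each $\Sigma_{0,N}$ is an $\mathcal{A}(\mathbb{C}P^2_q)$-bimodule. $[x]:=\frac{q^x-q^{-x}}{q-q^{-1}}$, $[n]!:=[n]\cdots[1]$, $[0]!:=1$, $[j,k,l]!:=q^{-(jk+kl+lj)}\frac{[j+k+l]!}{[j]![k]![l]!}$. $\Psi_N^\dagger$ is the conjugate-transpose row vector. *)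

theory Defs
  imports Complex_Main
begin

text \<open>Involution (star operation) on a unital algebra; all scalars appearing in the
statement are real, so a complex *-algebra is in particular such an algebra.\<close>
definition star_alg :: "('a::real_algebra_1 \<Rightarrow> 'a) \<Rightarrow> bool" where
  "star_alg st \<longleftrightarrow>
     (\<forall>x y. st (x + y) = st x + st y) \<and>
     (\<forall>x y. st (x * y) = st y * st x) \<and>
     (\<forall>x. st (st x) = x) \<and>
     (\<forall>r x. st (r *\<^sub>R x) = r *\<^sub>R st x) \<and>
     st 1 = 1"

definition S5q_rels :: "real \<Rightarrow> ('a::real_algebra_1 \<Rightarrow> 'a) \<Rightarrow> (nat \<Rightarrow> 'a) \<Rightarrow> bool" where
  "S5q_rels q st z \<longleftrightarrow>
     (\<forall>i\<in>{1,2,3}. \<forall>j\<in>{1,2,3}. i < j \<longrightarrow> z i * z j = q *\<^sub>R (z j * z i)) \<and>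
     (\<forall>i\<in>{1,2,3}. \<forall>j\<in>{1,2,3}. i \<noteq> j \<longrightarrow> st (z i) * z j = q *\<^sub>R (z j * st (z i))) \<and>
     st (z 1) * z 1 - z 1 * st (z 1) = 0 \<and>
     st (z 2) * z 2 - z 2 * st (z 2) = (1 - q\<^sup>2) *\<^sub>R (z 1 * st (z 1)) \<and>
     st (z 3) * z 3 - z 3 * st (z 3) = (1 - q\<^sup>2) *\<^sub>R (z 1 * st (z 1) + z 2 * st (z 2)) \<and>
     z 1 * st (z 1) + z 2 * st (z 2) + z 3 * st (z 3) = 1"

definition Z_grading :: "('a::real_algebra_1 \<Rightarrow> 'a) \<Rightarrow> (int \<Rightarrow> 'a set) \<Rightarrow> bool" where
  "Z_grading st Sig \<longleftrightarrow>
     (\<forall>n. 0 \<in> Sig n \<and> (\<forall>x\<in>Sig n. \<forall>y\<in>Sig n. x + y \<in> Sig n) \<and>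
          (\<forall>r. \<forall>x\<in>Sig n. r *\<^sub>R x \<in> Sig n)) \<and>
     (\<forall>m n. \<forall>x\<in>Sig m. \<forall>y\<in>Sig n. x * y \<in> Sig (m + n)) \<and>
     1 \<in> Sig 0 \<and>
     (\<forall>n. \<forall>x\<in>Sig n. st x \<in> Sig (- n)) \<and>
     (\<forall>x. \<exists>!f. finite {n. f n \<noteq> 0} \<and> (\<forall>n. f n \<in> Sig n) \<and>
              x = (\<Sum>n\<in>{n. f n \<noteq> 0}. f n))"

definition qnum :: "real \<Rightarrow> nat \<Rightarrow> real" where
  "qnum q x = (q ^ x - inverse q ^ x) / (q - inverse q)"

definition qfact :: "real \<Rightarrow> nat \<Rightarrow> real" where
  "qfact q n = (\<Prod>i = 1..n. qnum q i)"

definition qtri :: "real \<Rightarrow> nat \<Rightarrow> nat \<Rightarrow> nat \<Rightarrow> real" where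
  "qtri q j k l = inverse q ^ (j * k + k * l + l * j) * qfact q (j + k + l)
                   / (qfact q j * qfact q k * qfact q l)"

definition idx :: "int \<Rightarrow> (nat \<times> nat \<times> nat) set" where
  "idx N = {(j, k, l). j + k + l = nat \<bar>N\<bar>}"

definition dN :: "int \<Rightarrow> nat" where
  "dN N = (nat \<bar>N\<bar> + 1) * (nat \<bar>N\<bar> + 2) div 2"

definition zmono :: "(nat \<Rightarrow> 'a::real_algebra_1) \<Rightarrow> nat \<Rightarrow> nat \<Rightarrow> nat \<Rightarrow> 'a" where
  "zmono z j k l = z 1 ^ j * z 2 ^ k * z 3 ^ l"

definition psi_star :: "real \<Rightarrow> ('a::real_algebra_1 \<Rightarrow> 'a) \<Rightarrow> (nat \<Rightarrow> 'a) \<Rightarrow> int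
                         \<Rightarrow> nat \<times> nat \<times> nat \<Rightarrow> 'a" where
  "psi_star q st z N t = (case t of (j, k, l) \<Rightarrow>
      if N \<ge> 0 then sqrt (qtri q j k l) *\<^sub>R zmono z j k l
      else (q powi (- N + int j - int l) * sqrt (qtri q j k l)) *\<^sub>R st (zmono z j k l))"

definition psi :: "real \<Rightarrow> ('a::real_algebra_1 \<Rightarrow> 'a) \<Rightarrow> (nat \<Rightarrow> 'a) \<Rightarrow> int
                   \<Rightarrow> nat \<times> nat \<times> nat \<Rightarrow> 'a" where
  "psi q st z N t = (if t \<in> idx N then st (psi_star q st z N t) else 0)"

definition Pmat :: "real \<Rightarrow> ('a::real_algebra_1 \<Rightarrow> 'a) \<Rightarrow> (nat \<Rightarrow> 'a) \<Rightarrow> int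
                    \<Rightarrow> nat \<times> nat \<times> nat \<Rightarrow> nat \<times> nat \<times> nat \<Rightarrow> 'a" where
  "Pmat q st z N t s = psi q st z N t * st (psi q st z N s)"

text \<open>A(CP^2_q)^{d_N}: vectors indexed by idx N with entries in Sig 0 (0 outside idx N).\<close>
definition vecs :: "(int \<Rightarrow> 'a::real_algebra_1 set) \<Rightarrow> int \<Rightarrow> (nat \<times> nat \<times> nat \<Rightarrow> 'a) set" where
  "vecs Sig N = {v. (\<forall>t\<in>idx N. v t \<in> Sig 0) \<and> (\<forall>t. t \<notin> idx N \<longrightarrow> v t = 0)}"

end

theory Submission
  imports Defs
begin



definition idxn :: "nat \<Rightarrow> (nat \<times> nat \<times> nat) set" where
  "idxn n = {(j, k, l). j + k + l = n}"

lemma idx_idxn: "idx N = idxn (nat \<bar>N\<bar>)"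
  unfolding idx_def idxn_def by simp

lemma finite_idxn: "finite (idxn n)"
proof -
  have "idxn n \<subseteq> {..n} \<times> {..n} \<times> {..n}" unfolding idxn_def by auto
  thus ?thesis by (rule finite_subset) auto
qed

lemma qnum_add1:
  assumes "0 < q" "q < 1"
  shows "qnum q (a + b) = inverse q ^ b * qnum q a + q ^ a * qnum q b"
proof -
  have d: "q - inverse q \<noteq> 0" proof -
    have "1 < inverse q" using assms by (simp add: one_less_inverse)
    thus ?thesis using assms by simp
  qed
  have "q ^ (a+b) - inverse q ^ (a+b) = inverse q ^ b * (q ^ a - inverse q ^ a) + q ^ a * (q ^ b - inverse q ^ b)"
    by (simp add: power_add algebra_simps)
  thus ?thesis unfolding qnum_def using d by (simp add: add_divide_distrib)
qed

lemma qnum_add2: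
  assumes "0 < q" "q < 1"
  shows "qnum q (a + b) = q ^ b * qnum q a + inverse q ^ a * qnum q b"
  using qnum_add1[OF assms, of b a] by (simp add: add.commute mult.commute)

lemma qnum_pos:
  assumes "0 < q" "q < 1" "0 < n"
  shows "0 < qnum q n"
proof -
  have "q ^ n < 1" using assms by (simp add: power_less_one_iff)
  moreover have "1 < inverse q ^ n" using assms by (simp add: one_less_power one_less_inverse)
  moreover have "q < inverse q" using assms
    by (metis less_trans one_less_inverse)
  ultimately show ?thesis unfolding qnum_def by (simp add: divide_neg_neg)
qed

lemma qfact_pos: assumes "0 < q" "q < 1" shows "0 < qfact q n"
  unfolding qfact_def using qnum_pos[OF assms] by (intro prod_pos) auto

lemma qfact_Suc: "qfact q (Suc n) = qfact q n * qnum q (Suc n)"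
  unfolding qfact_def by (simp add: prod.nat_ivl_Suc')

lemma qtri_pos: assumes "0 < q" "q < 1" shows "0 < qtri q j k l"
  unfolding qtri_def using qfact_pos[OF assms] assms by simp




lemma qnum_0[simp]: "qnum q 0 = 0" unfolding qnum_def by simp

lemma qfact_shift:
  assumes "0 < q" "q < 1" "X \<noteq> 0"
  shows "c * qnum q j / (qfact q j * X) = (if j = 0 then 0 else c / (qfact q (j - 1) * X))"
proof (cases j)
  case (Suc j')
  have "qnum q j \<noteq> 0" using qnum_pos[OF assms(1,2)] Suc by (metis less_irrefl zero_less_Suc)
  then show ?thesis using Suc assms qfact_pos[OF assms(1,2), of j'] by (simp add: qfact_Suc)
qed simp

lemma iq_pow_mult: "q \<noteq> 0 \<Longrightarrow> inverse q ^ n * q ^ n = (1::real)"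
  by (simp add: power_mult_distrib[symmetric])

lemma pascal1:
  assumes q: "0 < q" "q < 1" and s: "j + k + l = Suc n"
  shows "qtri q j k l = (if 0 < j then inverse q ^ (2*(k+l)) * qtri q (j-1) k l else 0)
     + (if 0 < k then inverse q ^ (2*l) * qtri q j (k-1) l else 0)
     + (if 0 < l then qtri q j k (l-1) else 0)"
proof -
  define e where "e = j*k+k*l+l*j"
  have fj: "qfact q j \<noteq> 0" "qfact q k \<noteq> 0" "qfact q l \<noteq> 0" using qfact_pos[OF q, of j] qfact_pos[OF q, of k] qfact_pos[OF q, of l] by auto
  define D where "D = qfact q j * qfact q k * qfact q l"
  have qn: "qnum q (Suc n) = inverse q ^ (k+l) * qnum q j + q ^ j * (inverse q ^ l * qnum q k + q ^ k * qnum q l)"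
    using qnum_add1[OF q, of j "k+l"] qnum_add1[OF q, of k l] s[symmetric] by (simp add: add.assoc)
  have "qtri q j k l = inverse q ^ e * (qfact q n * qnum q (Suc n) / D)"
    unfolding qtri_def e_def D_def s by (simp add: qfact_Suc)
  also have "\<dots> = inverse q ^ e * (inverse q ^ (k+l) * (qfact q n * qnum q j / D))
     + inverse q ^ e * (q ^ j * inverse q ^ l * (qfact q n * qnum q k / D))
     + inverse q ^ e * (q ^ (j+k) * (qfact q n * qnum q l / D))"
    unfolding qn by (simp add: algebra_simps power_add add_divide_distrib)
  also have "inverse q ^ e * (inverse q ^ (k+l) * (qfact q n * qnum q j / D))
      = (if 0 < j then inverse q ^ (2*(k+l)) * qtri q (j-1) k l else 0)"
  proof (cases j)
    case 0 then show ?thesis by simp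
  next
    case (Suc j')
    have "qfact q n * qnum q j / D = qfact q n / (qfact q j' * (qfact q k * qfact q l))"
      using qfact_shift[OF q, of "qfact q k * qfact q l" "qfact q n" j] fj Suc unfolding D_def
      by (simp add: mult.assoc)
    moreover have "e = (j'*k+k*l+l*j') + (k+l)" unfolding e_def Suc by (simp add: algebra_simps)
    moreover have "j' + k + l = n" using s Suc by simp
    ultimately show ?thesis using Suc unfolding qtri_def
      by (simp add: power_add algebra_simps power_mult power2_eq_square)
  qed
  also have "inverse q ^ e * (q ^ j * inverse q ^ l * (qfact q n * qnum q k / D))
      = (if 0 < k then inverse q ^ (2*l) * qtri q j (k-1) l else 0)"
  proof (cases k)
    case 0 then show ?thesis by simp
  next
    case (Suc k')
    have "qfact q n * qnum q k / D = qfact q n / (qfact q k' * (qfact q j * qfact q l))"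
      using qfact_shift[OF q, of "qfact q j * qfact q l" "qfact q n" k] fj Suc unfolding D_def
      by (simp add: mult.assoc mult.left_commute)
    moreover have "e = (j*k'+k'*l+l*j) + (j+l)" unfolding e_def Suc by (simp add: algebra_simps)
    moreover have "j + k' + l = n" using s Suc by simp
    moreover have "inverse q ^ j * q ^ j = 1" using q iq_pow_mult by simp
    ultimately show ?thesis using Suc unfolding qtri_def
      by (simp add: power_add algebra_simps power_mult power2_eq_square)
  qed
  also have "inverse q ^ e * (q ^ (j+k) * (qfact q n * qnum q l / D))
      = (if 0 < l then qtri q j k (l-1) else 0)"
  proof (cases l)
    case 0 then show ?thesis by simp
  next
    case (Suc l')
    have "qfact q n * qnum q l / D = qfact q n / (qfact q l' * (qfact q j * qfact q k))"
      using qfact_shift[OF q, of "qfact q j * qfact q k" "qfact q n" l] fj Suc unfolding D_def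
      by (simp add: mult.assoc mult.left_commute mult.commute)
    moreover have "e = (j*k+k*l'+l'*j) + (j+k)" unfolding e_def Suc by (simp add: algebra_simps)
    moreover have "j + k + l' = n" using s Suc by simp
    moreover have "inverse q ^ (j+k) * q ^ (j+k) = 1" using q iq_pow_mult by simp
    ultimately show ?thesis using Suc unfolding qtri_def
      by (simp add: power_add algebra_simps power_mult power2_eq_square)
  qed
  finally show ?thesis .
qed


lemma pascal2:
  assumes q: "0 < q" "q < 1" and s: "j + k + l = Suc n"
  shows "qtri q j k l = (if 0 < j then qtri q (j-1) k l else 0)
     + (if 0 < k then inverse q ^ (2*j) * qtri q j (k-1) l else 0)
     + (if 0 < l then inverse q ^ (2*(j+k)) * qtri q j k (l-1) else 0)"
proof -
  define e where "e = j*k+k*l+l*j"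
  have fj: "qfact q j \<noteq> 0" "qfact q k \<noteq> 0" "qfact q l \<noteq> 0" using qfact_pos[OF q, of j] qfact_pos[OF q, of k] qfact_pos[OF q, of l] by auto
  define D where "D = qfact q j * qfact q k * qfact q l"
  have qn: "qnum q (Suc n) = q ^ (k+l) * qnum q j + inverse q ^ j * (q ^ l * qnum q k + inverse q ^ k * qnum q l)"
    using qnum_add2[OF q, of j "k+l"] qnum_add2[OF q, of k l] s[symmetric] by (simp add: add.assoc)
  have "qtri q j k l = inverse q ^ e * (qfact q n * qnum q (Suc n) / D)"
    unfolding qtri_def e_def D_def s by (simp add: qfact_Suc)
  also have "\<dots> = inverse q ^ e * (q ^ (k+l) * (qfact q n * qnum q j / D))
     + inverse q ^ e * (inverse q ^ j * q ^ l * (qfact q n * qnum q k / D))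
     + inverse q ^ e * (inverse q ^ (j+k) * (qfact q n * qnum q l / D))"
    unfolding qn by (simp add: algebra_simps power_add add_divide_distrib)
  also have "inverse q ^ e * (q ^ (k+l) * (qfact q n * qnum q j / D))
      = (if 0 < j then qtri q (j-1) k l else 0)"
  proof (cases j)
    case 0 then show ?thesis by simp
  next
    case (Suc j')
    have "qfact q n * qnum q j / D = qfact q n / (qfact q j' * (qfact q k * qfact q l))"
      using qfact_shift[OF q, of "qfact q k * qfact q l" "qfact q n" j] fj Suc unfolding D_def
      by (simp add: mult.assoc)
    moreover have "e = (j'*k+k*l+l*j') + (k+l)" unfolding e_def Suc by (simp add: algebra_simps)
    moreover have "j' + k + l = n" using s Suc by simp
    moreover have "inverse q ^ (k+l) * q ^ (k+l) = 1" using q iq_pow_mult by simp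
    ultimately show ?thesis using Suc unfolding qtri_def
      by (simp add: power_add algebra_simps power_mult power2_eq_square)
  qed
  also have "inverse q ^ e * (inverse q ^ j * q ^ l * (qfact q n * qnum q k / D))
      = (if 0 < k then inverse q ^ (2*j) * qtri q j (k-1) l else 0)"
  proof (cases k)
    case 0 then show ?thesis by simp
  next
    case (Suc k')
    have "qfact q n * qnum q k / D = qfact q n / (qfact q k' * (qfact q j * qfact q l))"
      using qfact_shift[OF q, of "qfact q j * qfact q l" "qfact q n" k] fj Suc unfolding D_def
      by (simp add: mult.assoc mult.left_commute)
    moreover have "e = (j*k'+k'*l+l*j) + (j+l)" unfolding e_def Suc by (simp add: algebra_simps)
    moreover have "j + k' + l = n" using s Suc by simp
    moreover have "inverse q ^ l * q ^ l = 1" using q iq_pow_mult by simp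
    ultimately show ?thesis using Suc unfolding qtri_def
      by (simp add: power_add algebra_simps power_mult power2_eq_square)
  qed
  also have "inverse q ^ e * (inverse q ^ (j+k) * (qfact q n * qnum q l / D))
      = (if 0 < l then inverse q ^ (2*(j+k)) * qtri q j k (l-1) else 0)"
  proof (cases l)
    case 0 then show ?thesis by simp
  next
    case (Suc l')
    have "qfact q n * qnum q l / D = qfact q n / (qfact q l' * (qfact q j * qfact q k))"
      using qfact_shift[OF q, of "qfact q j * qfact q k" "qfact q n" l] fj Suc unfolding D_def
      by (simp add: mult.assoc mult.left_commute mult.commute)
    moreover have "e = (j*k+k*l'+l'*j) + (j+k)" unfolding e_def Suc by (simp add: algebra_simps)
    moreover have "j + k + l' = n" using s Suc by simp
    ultimately show ?thesis using Suc unfolding qtri_def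
      by (simp add: power_add algebra_simps power_mult power2_eq_square)
  qed
  finally show ?thesis .
qed




lemma sum_shift_gen:
  assumes "inj_on f (idxn n)" "f ` idxn n \<subseteq> idxn (Suc n)"
    "\<forall>t\<in>idxn (Suc n) - f ` idxn n. h t = 0"
  shows "sum h (idxn (Suc n)) = sum (h \<circ> f) (idxn n)"
proof -
  have "sum h (f ` idxn n) = sum (h \<circ> f) (idxn n)" by (rule sum.reindex[OF assms(1)])
  moreover have "sum h (f ` idxn n) = sum h (idxn (Suc n))"
    by (rule sum.mono_neutral_left[OF finite_idxn assms(2)]) (use assms(3) in blast)
  ultimately show ?thesis by simp
qed

lemma sum_shift1:
  assumes "\<And>k l. h (0, k, l) = 0"
  shows "sum h (idxn (Suc n)) = sum (\<lambda>(j,k,l). h (Suc j, k, l)) (idxn n)"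
proof -
  let ?f = "\<lambda>(j::nat,k::nat,l::nat). (Suc j, k, l)"
  have "sum h (idxn (Suc n)) = sum (h \<circ> ?f) (idxn n)"
  proof (rule sum_shift_gen)
    show "inj_on ?f (idxn n)" by (auto simp: inj_on_def)
    show "?f ` idxn n \<subseteq> idxn (Suc n)" by (auto simp: idxn_def)
    show "\<forall>t\<in>idxn (Suc n) - ?f ` idxn n. h t = 0"
    proof
      fix t assume t: "t \<in> idxn (Suc n) - ?f ` idxn n"
      obtain j k l where tt: "t = (j,k,l)" by (cases t) auto
      show "h t = 0"
      proof (cases j)
        case 0 then show ?thesis using tt assms by simp
      next
        case (Suc j')
        then have "t \<in> ?f ` idxn n" using t tt by (intro rev_image_eqI[of "(j',k,l)"]) (auto simp: idxn_def)
        then show ?thesis using t by blast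
      qed
    qed
  qed
  then show ?thesis by (simp add: comp_def case_prod_beta)
qed

lemma sum_shift2:
  assumes "\<And>j l. h (j, 0, l) = 0"
  shows "sum h (idxn (Suc n)) = sum (\<lambda>(j,k,l). h (j, Suc k, l)) (idxn n)"
proof -
  let ?f = "\<lambda>(j::nat,k::nat,l::nat). (j, Suc k, l)"
  have "sum h (idxn (Suc n)) = sum (h \<circ> ?f) (idxn n)"
  proof (rule sum_shift_gen)
    show "inj_on ?f (idxn n)" by (auto simp: inj_on_def)
    show "?f ` idxn n \<subseteq> idxn (Suc n)" by (auto simp: idxn_def)
    show "\<forall>t\<in>idxn (Suc n) - ?f ` idxn n. h t = 0"
    proof
      fix t assume t: "t \<in> idxn (Suc n) - ?f ` idxn n"
      obtain j k l where tt: "t = (j,k,l)" by (cases t) auto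
      show "h t = 0"
      proof (cases k)
        case 0 then show ?thesis using tt assms by simp
      next
        case (Suc k')
        then have "t \<in> ?f ` idxn n" using t tt by (intro rev_image_eqI[of "(j,k',l)"]) (auto simp: idxn_def)
        then show ?thesis using t by blast
      qed
    qed
  qed
  then show ?thesis by (simp add: comp_def case_prod_beta)
qed

lemma sum_shift3:
  assumes "\<And>j k. h (j, k, 0) = 0"
  shows "sum h (idxn (Suc n)) = sum (\<lambda>(j,k,l). h (j, k, Suc l)) (idxn n)"
proof -
  let ?f = "\<lambda>(j::nat,k::nat,l::nat). (j, k, Suc l)"
  have "sum h (idxn (Suc n)) = sum (h \<circ> ?f) (idxn n)"
  proof (rule sum_shift_gen)
    show "inj_on ?f (idxn n)" by (auto simp: inj_on_def)
    show "?f ` idxn n \<subseteq> idxn (Suc n)" by (auto simp: idxn_def)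
    show "\<forall>t\<in>idxn (Suc n) - ?f ` idxn n. h t = 0"
    proof
      fix t assume t: "t \<in> idxn (Suc n) - ?f ` idxn n"
      obtain j k l where tt: "t = (j,k,l)" by (cases t) auto
      show "h t = 0"
      proof (cases l)
        case 0 then show ?thesis using tt assms by simp
      next
        case (Suc l')
        then have "t \<in> ?f ` idxn n" using t tt by (intro rev_image_eqI[of "(j,k,l')"]) (auto simp: idxn_def)
        then show ?thesis using t by blast
      qed
    qed
  qed
  then show ?thesis by (simp add: comp_def case_prod_beta)
qed

lemma idxn_0: "idxn 0 = {(0,0,0)}" unfolding idxn_def by auto

lemma card_idxn: "card (idxn n) = (n + 1) * (n + 2) div 2"
proof (induction n)
  case 0 then show ?case by (simp add: idxn_0)
next
  case (Suc n)
  let ?f = "\<lambda>(j::nat,k::nat,l::nat). (Suc j, k, l)"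
  let ?B = "(\<lambda>k. (0::nat, k, Suc n - k)) ` {0..Suc n}"
  have eq: "idxn (Suc n) = ?f ` idxn n \<union> ?B"
  proof
    show "idxn (Suc n) \<subseteq> ?f ` idxn n \<union> ?B"
    proof
      fix t assume t: "t \<in> idxn (Suc n)"
      obtain j k l where tt: "t = (j,k,l)" by (cases t) auto
      show "t \<in> ?f ` idxn n \<union> ?B"
      proof (cases j)
        case 0 then show ?thesis using t tt by (auto simp: idxn_def intro!: rev_image_eqI[of k])
      next
        case (Suc j')
        then show ?thesis using t tt by (auto simp: idxn_def intro!: rev_image_eqI[of "(j',k,l)"])
      qed
    qed
    show "?f ` idxn n \<union> ?B \<subseteq> idxn (Suc n)" by (auto simp: idxn_def)
  qed
  have disj: "?f ` idxn n \<inter> ?B = {}" by auto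
  have c1: "card (?f ` idxn n) = card (idxn n)" by (rule card_image) (auto simp: inj_on_def)
  have c2: "card ?B = Suc (Suc n)" by (subst card_image) (auto simp: inj_on_def)
  have "card (idxn (Suc n)) = card (idxn n) + Suc (Suc n)"
    unfolding eq by (subst card_Un_disjoint) (use disj c1 c2 finite_idxn in auto)
  then show ?case using Suc.IH by simp
qed




locale S5 =
  fixes q :: real and st :: "'a::real_algebra_1 \<Rightarrow> 'a" and z :: "nat \<Rightarrow> 'a"
  assumes q0: "0 < q" and q1: "q < 1" and star: "star_alg st" and rels: "S5q_rels q st z"
begin

lemma st_add: "st (x + y) = st x + st y" using star unfolding star_alg_def by blast
lemma st_mult: "st (x * y) = st y * st x" using star unfolding star_alg_def by blast
lemma st_st[simp]: "st (st x) = x" using star unfolding star_alg_def by blast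
lemma st_scaleR: "st (r *\<^sub>R x) = r *\<^sub>R st x" using star unfolding star_alg_def by blast
lemma st_one[simp]: "st 1 = 1" using star unfolding star_alg_def by blast
lemma st_zero[simp]: "st 0 = 0"
proof -
  have "st (0 + 0) = st 0 + st 0" by (rule st_add)
  then show ?thesis by simp
qed
lemma st_sum: "st (sum f A) = sum (\<lambda>x. st (f x)) A"
  by (induction A rule: infinite_finite_induct) (auto simp: st_add)
lemma st_power: "st (x ^ n) = st x ^ n"
  by (induction n) (auto simp: st_mult power_commutes)

lemma r12: "z 1 * z 2 = q *\<^sub>R (z 2 * z 1)"
  using rels unfolding S5q_rels_def by auto
lemma r13: "z 1 * z 3 = q *\<^sub>R (z 3 * z 1)"
  using rels unfolding S5q_rels_def by auto
lemma r23: "z 2 * z 3 = q *\<^sub>R (z 3 * z 2)"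
  using rels unfolding S5q_rels_def by auto
lemma d1: "st (z 1) * z 1 = z 1 * st (z 1)"
  using rels unfolding S5q_rels_def by auto
lemma d2: "st (z 2) * z 2 = z 2 * st (z 2) + (1 - q\<^sup>2) *\<^sub>R (z 1 * st (z 1))"
  using rels unfolding S5q_rels_def by (auto simp: algebra_simps)
lemma d3: "st (z 3) * z 3 = z 3 * st (z 3) + (1 - q\<^sup>2) *\<^sub>R (z 1 * st (z 1) + z 2 * st (z 2))"
  using rels unfolding S5q_rels_def by (auto simp: algebra_simps)
lemma X1: "z 1 * st (z 1) + z 2 * st (z 2) + z 3 * st (z 3) = 1"
  using rels unfolding S5q_rels_def by auto

lemma Y1: "q^4 *\<^sub>R (st (z 1) * z 1) + q^2 *\<^sub>R (st (z 2) * z 2) + st (z 3) * z 3 = 1"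
proof -
  define x1 where "x1 = z 1 * st (z 1)"
  define x2 where "x2 = z 2 * st (z 2)"
  define x3 where "x3 = z 3 * st (z 3)"
  have "q^4 *\<^sub>R (st (z 1) * z 1) + q^2 *\<^sub>R (st (z 2) * z 2) + st (z 3) * z 3
     = (q^4 + q^2 * (1 - q^2) + (1 - q^2)) *\<^sub>R x1 + (q^2 + (1 - q^2)) *\<^sub>R x2 + x3"
    unfolding d1 d2 d3 x1_def[symmetric] x2_def[symmetric] x3_def[symmetric]
    by (simp add: algebra_simps)
  also have "\<dots> = x1 + x2 + x3" by (simp add: algebra_simps)
  also have "\<dots> = 1" using X1 unfolding x1_def x2_def x3_def .
  finally show ?thesis .
qed

end

lemma assoc_comm: "x * y = c *\<^sub>R (y * x) \<Longrightarrow> x * (y * w) = c *\<^sub>R (y * (x * w))"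
  for x y :: "'a::real_algebra_1"
  by (metis mult.assoc mult_scaleR_left)

lemma commL: "x * y = c *\<^sub>R (y * x) \<Longrightarrow> x ^ n * y = (c ^ n) *\<^sub>R (y * x ^ n)"
  for x y :: "'a::real_algebra_1"
proof (induction n)
  case (Suc n)
  have "x ^ Suc n * y = x * (x ^ n * y)" by (simp add: mult.assoc)
  also have "\<dots> = c ^ n *\<^sub>R (x * (y * x ^ n))" using Suc by simp
  also have "\<dots> = c ^ n *\<^sub>R (c *\<^sub>R (y * (x * x ^ n)))" using assoc_comm[OF Suc.prems] by simp
  also have "\<dots> = c ^ Suc n *\<^sub>R (y * x ^ Suc n)" by (simp add: mult.commute)
  finally show ?case .
qed simp

lemma commR: "x * y = c *\<^sub>R (y * x) \<Longrightarrow> x * y ^ n = (c ^ n) *\<^sub>R (y ^ n * x)"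
  for x y :: "'a::real_algebra_1"
proof (induction n)
  case (Suc n)
  have "x * y ^ Suc n = (x * y ^ n) * y" by (simp add: mult.assoc power_commutes)
  also have "\<dots> = c ^ n *\<^sub>R (y ^ n * (x * y))" using Suc by (simp add: mult.assoc)
  also have "\<dots> = c ^ n *\<^sub>R (y ^ n * (c *\<^sub>R (y * x)))" using Suc.prems by simp
  also have "\<dots> = c ^ Suc n *\<^sub>R (y ^ Suc n * x)" by (simp add: mult.assoc[symmetric] power_commutes mult.commute)
  finally show ?case .
qed simp

lemma commL': "x * y = c *\<^sub>R (y * x) \<Longrightarrow> x ^ n * (y * w) = (c ^ n) *\<^sub>R (y * (x ^ n * w))"
  for x y :: "'a::real_algebra_1"
  using commL[of x y c n] by (metis mult.assoc mult_scaleR_left)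

lemma commR': "x * y = c *\<^sub>R (y * x) \<Longrightarrow> x * (y ^ n * w) = (c ^ n) *\<^sub>R (y ^ n * (x * w))"
  for x y :: "'a::real_algebra_1"
  using commR[of x y c n] by (metis mult.assoc mult_scaleR_left)

lemma power_Suc_right: "x ^ Suc n = x ^ n * x" for x :: "'a::monoid_mult"
  by (simp add: power_commutes)

definition mo3 :: "'a::real_algebra_1 \<Rightarrow> 'a \<Rightarrow> 'a \<Rightarrow> nat \<Rightarrow> nat \<Rightarrow> nat \<Rightarrow> 'a" where
  "mo3 a b c j k l = a ^ j * b ^ k * c ^ l"

locale mono3 =
  fixes q :: real and a b c :: "'a::real_algebra_1"
  assumes hab: "a * b = q *\<^sub>R (b * a)" and hac: "a * c = q *\<^sub>R (c * a)"
    and hbc: "b * c = q *\<^sub>R (c * b)"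
begin
abbreviation mo where "mo \<equiv> mo3 a b c"
lemma mL1: "mo (Suc j) k l = a * mo j k l"
  unfolding mo3_def by (simp add: mult.assoc)
lemma mL2: "mo j (Suc k) l = q ^ j *\<^sub>R (b * mo j k l)"
  unfolding mo3_def by (simp add: mult.assoc commL'[OF hab])
lemma mL3: "mo j k (Suc l) = q ^ (j + k) *\<^sub>R (c * mo j k l)"
  unfolding mo3_def by (simp add: mult.assoc commL'[OF hac] commL'[OF hbc] power_add mult.commute)
lemma mR1: "mo (Suc j) k l = q ^ (k + l) *\<^sub>R (mo j k l * a)"
  unfolding mo3_def by (simp add: mult.assoc power_Suc_right commR'[OF hab] commR[OF hac] power_add del: power_Suc)
lemma mR2: "mo j (Suc k) l = q ^ l *\<^sub>R (mo j k l * b)"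
  unfolding mo3_def by (simp add: mult.assoc power_Suc_right commR[OF hbc] del: power_Suc)
lemma mR3: "mo j k (Suc l) = mo j k l * c"
  unfolding mo3_def by (simp add: mult.assoc power_Suc_right del: power_Suc)
end




lemma coef_one: "0 < q \<Longrightarrow> inverse q ^ (2*a) * (q ^ a * q ^ a) = (1::real)"
proof -
  assume "0 < q"
  then have h: "inverse q ^ a * q ^ a = 1" using iq_pow_mult by simp
  have "inverse q ^ (2*a) = inverse q ^ a * inverse q ^ a" by (simp add: mult_2 power_add)
  then have "inverse q ^ (2*a) * (q ^ a * q ^ a) = (inverse q ^ a * q ^ a) * (inverse q ^ a * q ^ a)"
    by (simp only: mult_ac)
  then show ?thesis using h by simp
qed

lemma mem_idxn: "(j,k,l) \<in> idxn n \<longleftrightarrow> j + k + l = n" unfolding idxn_def by simp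

context S5 begin

sublocale mono3 q "z 1" "z 2" "z 3" by unfold_locales (rule r12, rule r13, rule r23)

lemma zmono_mo: "zmono z = mo" by (intro ext) (simp add: zmono_def mo3_def)

lemma mo00[simp]: "mo3 a b c 0 0 0 = 1" by (simp add: mo3_def)

lemma qtri000[simp]: "qtri q 0 0 0 = 1" by (simp add: qtri_def qfact_def)

lemma TA1: "(inverse q ^ (2*(k+l)) * qtri q j k l) *\<^sub>R (mo (Suc j) k l * st (mo (Suc j) k l))
   = qtri q j k l *\<^sub>R (mo j k l * (z 1 * st (z 1)) * st (mo j k l))"
  using coef_one[OF q0, of "k+l"] unfolding mR1 st_scaleR st_mult by (simp add: mult.assoc)
lemma TA2: "(inverse q ^ (2*l) * qtri q j k l) *\<^sub>R (mo j (Suc k) l * st (mo j (Suc k) l))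
   = qtri q j k l *\<^sub>R (mo j k l * (z 2 * st (z 2)) * st (mo j k l))"
  using coef_one[OF q0, of "l"] unfolding mR2 st_scaleR st_mult by (simp add: mult.assoc)
lemma TA3: "qtri q j k l *\<^sub>R (mo j k (Suc l) * st (mo j k (Suc l)))
   = qtri q j k l *\<^sub>R (mo j k l * (z 3 * st (z 3)) * st (mo j k l))"
  unfolding mR3 st_mult by (simp add: mult.assoc)

lemma A_id: "(\<Sum>t\<in>idxn n. (case t of (j,k,l) \<Rightarrow> qtri q j k l *\<^sub>R (mo j k l * st (mo j k l)))) = 1"
proof (induction n)
  case 0 then show ?case by (simp add: idxn_0)
next
  case (Suc n)
  define G1 where "G1 = (\<lambda>(j,k,l). (if 0 < j then inverse q ^ (2*(k+l)) * qtri q (j-1) k l else 0) *\<^sub>R (mo j k l * st (mo j k l)))"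
  define G2 where "G2 = (\<lambda>(j,k,l). (if 0 < k then inverse q ^ (2*l) * qtri q j (k-1) l else 0) *\<^sub>R (mo j k l * st (mo j k l)))"
  define G3 where "G3 = (\<lambda>(j,k,l). (if 0 < l then qtri q j k (l-1) else 0) *\<^sub>R (mo j k l * st (mo j k l)))"
  have "(\<Sum>t\<in>idxn (Suc n). (case t of (j,k,l) \<Rightarrow> qtri q j k l *\<^sub>R (mo j k l * st (mo j k l))))
      = (\<Sum>t\<in>idxn (Suc n). G1 t + G2 t + G3 t)"
  proof (rule sum.cong[OF refl])
    fix t assume "t \<in> idxn (Suc n)"
    then obtain j k l where t: "t = (j,k,l)" "j + k + l = Suc n" by (cases t) (auto simp: mem_idxn)
    show "(case t of (j,k,l) \<Rightarrow> qtri q j k l *\<^sub>R (mo j k l * st (mo j k l))) = G1 t + G2 t + G3 t"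
      unfolding t(1) G1_def G2_def G3_def prod.case
      by (subst pascal1[OF q0 q1 t(2)]) (simp only: scaleR_add_left)
  qed
  also have "\<dots> = sum G1 (idxn (Suc n)) + sum G2 (idxn (Suc n)) + sum G3 (idxn (Suc n))"
    by (simp add: sum.distrib)
  also have "sum G1 (idxn (Suc n)) = (\<Sum>t\<in>idxn n. case t of (j,k,l) \<Rightarrow> qtri q j k l *\<^sub>R (mo j k l * (z 1 * st (z 1)) * st (mo j k l)))" (is "_ = ?rhs")
  proof -
    have zz: "\<And>a b. G1 (0,a,b) = 0" by (simp add: G1_def)
    have "sum G1 (idxn (Suc n)) = sum (\<lambda>(j,k,l). G1 (Suc j, k, l)) (idxn n)" by (rule sum_shift1[of "G1", OF zz])
    also have "\<dots> = ?rhs" unfolding G1_def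
      by (simp only: prod.case zero_less_Suc if_True diff_Suc_1 TA1)
    finally show ?thesis .
  qed
  also have "sum G2 (idxn (Suc n)) = (\<Sum>t\<in>idxn n. case t of (j,k,l) \<Rightarrow> qtri q j k l *\<^sub>R (mo j k l * (z 2 * st (z 2)) * st (mo j k l)))" (is "_ = ?rhs")
  proof -
    have zz: "\<And>a b. G2 (a,0,b) = 0" by (simp add: G2_def)
    have "sum G2 (idxn (Suc n)) = sum (\<lambda>(j,k,l). G2 (j, Suc k, l)) (idxn n)" by (rule sum_shift2[of "G2", OF zz])
    also have "\<dots> = ?rhs" unfolding G2_def
      by (simp only: prod.case zero_less_Suc if_True diff_Suc_1 TA2)
    finally show ?thesis .
  qed
  also have "sum G3 (idxn (Suc n)) = (\<Sum>t\<in>idxn n. case t of (j,k,l) \<Rightarrow> qtri q j k l *\<^sub>R (mo j k l * (z 3 * st (z 3)) * st (mo j k l)))" (is "_ = ?rhs")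
  proof -
    have zz: "\<And>a b. G3 (a,b,0) = 0" by (simp add: G3_def)
    have "sum G3 (idxn (Suc n)) = sum (\<lambda>(j,k,l). G3 (j, k, Suc l)) (idxn n)" by (rule sum_shift3[of "G3", OF zz])
    also have "\<dots> = ?rhs" unfolding G3_def
      by (simp only: prod.case zero_less_Suc if_True diff_Suc_1 TA3)
    finally show ?thesis .
  qed
  also have "(\<Sum>t\<in>idxn n. case t of (j,k,l) \<Rightarrow> qtri q j k l *\<^sub>R (mo j k l * (z 1 * st (z 1)) * st (mo j k l)))
     + (\<Sum>t\<in>idxn n. case t of (j,k,l) \<Rightarrow> qtri q j k l *\<^sub>R (mo j k l * (z 2 * st (z 2)) * st (mo j k l)))
     + (\<Sum>t\<in>idxn n. case t of (j,k,l) \<Rightarrow> qtri q j k l *\<^sub>R (mo j k l * (z 3 * st (z 3)) * st (mo j k l)))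
     = (\<Sum>t\<in>idxn n. case t of (j,k,l) \<Rightarrow> qtri q j k l *\<^sub>R (mo j k l * (z 1 * st (z 1) + z 2 * st (z 2) + z 3 * st (z 3)) * st (mo j k l)))"
    by (simp add: sum.distrib[symmetric] split_def distrib_left distrib_right scaleR_add_right)
  also have "\<dots> = 1" unfolding X1 using Suc.IH by simp
  finally show ?case .
qed

end


context S5 begin

lemma TB1: "(q ^ (2 * (2 * Suc j + k)) * qtri q j k l) *\<^sub>R (st (mo (Suc j) k l) * mo (Suc j) k l)
   = (q ^ (2 * (2 * j + k)) * qtri q j k l) *\<^sub>R (st (mo j k l) * (q^4 *\<^sub>R (st (z 1) * z 1)) * mo j k l)"
proof -
  have e: "2 * (2 * Suc j + k) = 2 * (2 * j + k) + 4" by simp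
  have p: "q ^ (2 * (2 * Suc j + k)) = q ^ (2 * (2 * j + k)) * q ^ 4" by (simp only: e power_add)
  have c: "q ^ (2 * (2 * Suc j + k)) * qtri q j k l = q ^ (2 * (2 * j + k)) * qtri q j k l * q ^ 4" unfolding p by (simp only: mult_ac)
  show ?thesis unfolding mL1 st_mult c
    by (simp only: mult_scaleR_left mult_scaleR_right scaleR_scaleR mult.assoc)
qed

lemma TB2: "(q ^ (2 * (2 * j + Suc k)) * (inverse q ^ (2*j) * qtri q j k l)) *\<^sub>R (st (mo j (Suc k) l) * mo j (Suc k) l)
   = (q ^ (2 * (2 * j + k)) * qtri q j k l) *\<^sub>R (st (mo j k l) * (q^2 *\<^sub>R (st (z 2) * z 2)) * mo j k l)"
proof -
  have e: "2 * (2 * j + Suc k) = 2 * (2 * j + k) + 2" by simp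
  have c: "inverse q ^ (2*j) * (q ^ j * q ^ j) = 1" by (rule coef_one[OF q0])
  have "q ^ (2 * (2 * j + Suc k)) * (inverse q ^ (2*j) * qtri q j k l) * (q ^ j * q ^ j)
      = q ^ (2 * (2 * j + k)) * qtri q j k l * q ^ 2"
    unfolding e power_add using c by (simp add: algebra_simps)
  then show ?thesis unfolding mL2 st_mult st_scaleR
    by (simp only: mult_scaleR_left mult_scaleR_right scaleR_scaleR mult.assoc)
qed

lemma TB3: "(q ^ (2 * (2 * j + k)) * (inverse q ^ (2*(j+k)) * qtri q j k l)) *\<^sub>R (st (mo j k (Suc l)) * mo j k (Suc l))
   = (q ^ (2 * (2 * j + k)) * qtri q j k l) *\<^sub>R (st (mo j k l) * (st (z 3) * z 3) * mo j k l)"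
proof -
  have c: "inverse q ^ (2*(j+k)) * (q ^ (j+k) * q ^ (j+k)) = 1" by (rule coef_one[OF q0])
  have "q ^ (2 * (2 * j + k)) * (inverse q ^ (2*(j+k)) * qtri q j k l) * (q ^ (j+k) * q ^ (j+k))
      = q ^ (2 * (2 * j + k)) * qtri q j k l"
    using c by (simp add: algebra_simps)
  then show ?thesis unfolding mL3 st_mult st_scaleR
    by (simp only: mult_scaleR_left mult_scaleR_right scaleR_scaleR mult.assoc)
qed

lemma B_id: "(\<Sum>t\<in>idxn n. (case t of (j,k,l) \<Rightarrow> (q ^ (2 * (2 * j + k)) * qtri q j k l) *\<^sub>R (st (mo j k l) * mo j k l))) = 1"
proof (induction n)
  case 0 then show ?case by (simp add: idxn_0)
next
  case (Suc n)
  define G1 where "G1 = (\<lambda>(j,k,l). (q ^ (2 * (2 * j + k)) * (if 0 < j then qtri q (j-1) k l else 0)) *\<^sub>R (st (mo j k l) * mo j k l))"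
  define G2 where "G2 = (\<lambda>(j,k,l). (q ^ (2 * (2 * j + k)) * (if 0 < k then inverse q ^ (2*j) * qtri q j (k-1) l else 0)) *\<^sub>R (st (mo j k l) * mo j k l))"
  define G3 where "G3 = (\<lambda>(j,k,l). (q ^ (2 * (2 * j + k)) * (if 0 < l then inverse q ^ (2*(j+k)) * qtri q j k (l-1) else 0)) *\<^sub>R (st (mo j k l) * mo j k l))"
  have "(\<Sum>t\<in>idxn (Suc n). (case t of (j,k,l) \<Rightarrow> (q ^ (2 * (2 * j + k)) * qtri q j k l) *\<^sub>R (st (mo j k l) * mo j k l)))
      = (\<Sum>t\<in>idxn (Suc n). G1 t + G2 t + G3 t)"
  proof (rule sum.cong[OF refl])
    fix t assume "t \<in> idxn (Suc n)"
    then obtain j k l where t: "t = (j,k,l)" "j + k + l = Suc n" by (cases t) (auto simp: mem_idxn)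
    show "(case t of (j,k,l) \<Rightarrow> (q ^ (2 * (2 * j + k)) * qtri q j k l) *\<^sub>R (st (mo j k l) * mo j k l)) = G1 t + G2 t + G3 t"
      unfolding t(1) G1_def G2_def G3_def prod.case
      by (subst pascal2[OF q0 q1 t(2)]) (simp only: scaleR_add_left distrib_left)
  qed
  also have "\<dots> = sum G1 (idxn (Suc n)) + sum G2 (idxn (Suc n)) + sum G3 (idxn (Suc n))"
    by (simp add: sum.distrib)
  also have "sum G1 (idxn (Suc n)) = (\<Sum>t\<in>idxn n. case t of (j,k,l) \<Rightarrow> (q ^ (2 * (2 * j + k)) * qtri q j k l) *\<^sub>R (st (mo j k l) * (q^4 *\<^sub>R (st (z 1) * z 1)) * mo j k l))" (is "_ = ?rhs")
  proof -
    have zz: "\<And>a b. G1 (0,a,b) = 0" by (simp add: G1_def)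
    have "sum G1 (idxn (Suc n)) = sum (\<lambda>(j,k,l). G1 (Suc j, k, l)) (idxn n)" by (rule sum_shift1[of G1, OF zz])
    also have "\<dots> = ?rhs" unfolding G1_def
      by (simp only: prod.case zero_less_Suc if_True diff_Suc_1 TB1)
    finally show ?thesis .
  qed
  also have "sum G2 (idxn (Suc n)) = (\<Sum>t\<in>idxn n. case t of (j,k,l) \<Rightarrow> (q ^ (2 * (2 * j + k)) * qtri q j k l) *\<^sub>R (st (mo j k l) * (q^2 *\<^sub>R (st (z 2) * z 2)) * mo j k l))" (is "_ = ?rhs")
  proof -
    have zz: "\<And>a b. G2 (a,0,b) = 0" by (simp add: G2_def)
    have "sum G2 (idxn (Suc n)) = sum (\<lambda>(j,k,l). G2 (j, Suc k, l)) (idxn n)" by (rule sum_shift2[of G2, OF zz])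
    also have "\<dots> = ?rhs" unfolding G2_def
      by (simp only: prod.case zero_less_Suc if_True diff_Suc_1 TB2)
    finally show ?thesis .
  qed
  also have "sum G3 (idxn (Suc n)) = (\<Sum>t\<in>idxn n. case t of (j,k,l) \<Rightarrow> (q ^ (2 * (2 * j + k)) * qtri q j k l) *\<^sub>R (st (mo j k l) * (st (z 3) * z 3) * mo j k l))" (is "_ = ?rhs")
  proof -
    have zz: "\<And>a b. G3 (a,b,0) = 0" by (simp add: G3_def)
    have "sum G3 (idxn (Suc n)) = sum (\<lambda>(j,k,l). G3 (j, k, Suc l)) (idxn n)" by (rule sum_shift3[of G3, OF zz])
    also have "\<dots> = ?rhs" unfolding G3_def
      by (simp only: prod.case zero_less_Suc if_True diff_Suc_1 TB3)
    finally show ?thesis .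
  qed
  also have "(\<Sum>t\<in>idxn n. case t of (j,k,l) \<Rightarrow> (q ^ (2 * (2 * j + k)) * qtri q j k l) *\<^sub>R (st (mo j k l) * (q^4 *\<^sub>R (st (z 1) * z 1)) * mo j k l))
     + (\<Sum>t\<in>idxn n. case t of (j,k,l) \<Rightarrow> (q ^ (2 * (2 * j + k)) * qtri q j k l) *\<^sub>R (st (mo j k l) * (q^2 *\<^sub>R (st (z 2) * z 2)) * mo j k l))
     + (\<Sum>t\<in>idxn n. case t of (j,k,l) \<Rightarrow> (q ^ (2 * (2 * j + k)) * qtri q j k l) *\<^sub>R (st (mo j k l) * (st (z 3) * z 3) * mo j k l))
     = (\<Sum>t\<in>idxn n. case t of (j,k,l) \<Rightarrow> (q ^ (2 * (2 * j + k)) * qtri q j k l) *\<^sub>R (st (mo j k l) * (q^4 *\<^sub>R (st (z 1) * z 1) + q^2 *\<^sub>R (st (z 2) * z 2) + st (z 3) * z 3) * mo j k l))"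
    by (simp only: sum.distrib[symmetric] split_def distrib_left distrib_right scaleR_add_right)
  also have "\<dots> = 1" unfolding Y1 using Suc.IH by simp
  finally show ?case .
qed

end



context
  fixes st :: "'a::real_algebra_1 \<Rightarrow> 'a" and Sig :: "int \<Rightarrow> 'a set"
  assumes gr: "Z_grading st Sig"
begin
lemma g0: "0 \<in> Sig n" using gr unfolding Z_grading_def by blast
lemma gadd: "x \<in> Sig n \<Longrightarrow> y \<in> Sig n \<Longrightarrow> x + y \<in> Sig n" using gr unfolding Z_grading_def by blast
lemma gscale: "x \<in> Sig n \<Longrightarrow> r *\<^sub>R x \<in> Sig n" using gr unfolding Z_grading_def by blast
lemma gmult: "x \<in> Sig m \<Longrightarrow> y \<in> Sig n \<Longrightarrow> k = m + n \<Longrightarrow> x * y \<in> Sig k"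
  using gr unfolding Z_grading_def by blast
lemma gone: "1 \<in> Sig 0" using gr unfolding Z_grading_def by blast
lemma gst: "x \<in> Sig n \<Longrightarrow> k = - n \<Longrightarrow> st x \<in> Sig k" using gr unfolding Z_grading_def by blast
lemma gsum: "(\<And>x. x \<in> A \<Longrightarrow> f x \<in> Sig n) \<Longrightarrow> sum f A \<in> Sig n"
  by (induction A rule: infinite_finite_induct) (auto intro: g0 gadd)
lemma gpow: "x \<in> Sig 1 \<Longrightarrow> x ^ n \<in> Sig (int n)"
  by (induction n) (auto intro: gone gmult)
end

lemma st_zero_gen: "star_alg st \<Longrightarrow> st 0 = 0"
proof -
  assume "star_alg st"
  then have "st (0 + 0) = st 0 + st 0" unfolding star_alg_def by blast
  then show ?thesis by simp
qed

lemma right_module: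
  fixes st :: "'a::real_algebra_1 \<Rightarrow> 'a" and Sig :: "int \<Rightarrow> 'a set" and I :: "'b set"
    and \<psi> :: "'b \<Rightarrow> 'a" and P :: "'b \<Rightarrow> 'b \<Rightarrow> 'a"
  assumes star: "star_alg st" and gr: "Z_grading st Sig" and fin: "finite I"
    and unit: "(\<Sum>t\<in>I. st (\<psi> t) * \<psi> t) = 1"
    and deg: "\<And>t. \<psi> t \<in> Sig (- N)" and zero: "\<And>t. t \<notin> I \<Longrightarrow> \<psi> t = 0"
    and Pdef: "\<And>t s. P t s = \<psi> t * st (\<psi> s)"
    and V: "V = {v. (\<forall>t\<in>I. v t \<in> Sig 0) \<and> (\<forall>t. t \<notin> I \<longrightarrow> v t = 0)}"
    and M: "M = {(\<lambda>t. \<Sum>s\<in>I. P t s * w s) | w. w \<in> V}"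
    and phi: "\<phi> = (\<lambda>v. \<Sum>t\<in>I. st (\<psi> t) * v t)"
  shows
    "(\<forall>t\<in>I. \<forall>s\<in>I. P t s \<in> Sig 0) \<and>
     (\<forall>t\<in>I. \<forall>s\<in>I. (\<Sum>u\<in>I. P t u * P u s) = P t s) \<and>
     (\<forall>t\<in>I. \<forall>s\<in>I. st (P s t) = P t s) \<and>
     bij_betw \<phi> M (Sig N) \<and>
     (\<forall>v\<in>M. \<forall>w\<in>M. (\<lambda>t. v t + w t) \<in> M \<and> \<phi> (\<lambda>t. v t + w t) = \<phi> v + \<phi> w) \<and>
     (\<forall>v\<in>M. \<forall>b\<in>Sig 0. (\<lambda>t. v t * b) \<in> M \<and> \<phi> (\<lambda>t. v t * b) = \<phi> v * b) \<and>
     (\<forall>a\<in>Sig N. (\<lambda>t. \<psi> t * a) \<in> M \<and> \<phi> (\<lambda>t. \<psi> t * a) = a) \<and>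
     (\<forall>v\<in>M. (\<lambda>t. \<psi> t * \<phi> v) = v)"
proof -
  have st_mult: "\<And>x y. st (x * y) = st y * st x" using star unfolding star_alg_def by blast
  have st_st: "\<And>x. st (st x) = x" using star unfolding star_alg_def by blast
  have stdeg: "\<And>t. st (\<psi> t) \<in> Sig N" using gst[OF gr deg] by simp
  have P0: "\<forall>t\<in>I. \<forall>s\<in>I. P t s \<in> Sig 0"
    unfolding Pdef using gmult[OF gr deg stdeg] by simp
  have proj: "\<forall>t\<in>I. \<forall>s\<in>I. (\<Sum>u\<in>I. P t u * P u s) = P t s"
  proof (intro ballI)
    fix t s
    have "(\<Sum>u\<in>I. P t u * P u s) = \<psi> t * (\<Sum>u\<in>I. st (\<psi> u) * \<psi> u) * st (\<psi> s)"
      unfolding Pdef by (simp add: sum_distrib_left sum_distrib_right mult.assoc)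
    then show "(\<Sum>u\<in>I. P t u * P u s) = P t s" unfolding unit Pdef by simp
  qed
  have sa: "\<forall>t\<in>I. \<forall>s\<in>I. st (P s t) = P t s" unfolding Pdef by (simp add: st_mult st_st)
  have phiM: "\<phi> (\<lambda>t. \<Sum>s\<in>I. P t s * w s) = (\<Sum>s\<in>I. st (\<psi> s) * w s)" for w
  proof -
    have "\<phi> (\<lambda>t. \<Sum>s\<in>I. P t s * w s) = (\<Sum>t\<in>I. \<Sum>s\<in>I. st (\<psi> t) * \<psi> t * (st (\<psi> s) * w s))"
      unfolding phi Pdef by (simp add: sum_distrib_left mult.assoc)
    also have "\<dots> = (\<Sum>s\<in>I. \<Sum>t\<in>I. st (\<psi> t) * \<psi> t * (st (\<psi> s) * w s))" by (rule sum.swap)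
    also have "\<dots> = (\<Sum>s\<in>I. (\<Sum>t\<in>I. st (\<psi> t) * \<psi> t) * (st (\<psi> s) * w s))" by (simp add: sum_distrib_right)
    also have "\<dots> = (\<Sum>s\<in>I. st (\<psi> s) * w s)" unfolding unit by simp
    finally show ?thesis .
  qed
  have recon: "(\<lambda>t. \<psi> t * \<phi> (\<lambda>t. \<Sum>s\<in>I. P t s * w s)) = (\<lambda>t. \<Sum>s\<in>I. P t s * w s)" for w
    by (subst phiM) (simp add: Pdef sum_distrib_left mult.assoc)
  have recon': "\<forall>v\<in>M. (\<lambda>t. \<psi> t * \<phi> v) = v" unfolding M using recon by blast
  have phimem: "\<phi> v \<in> Sig N" if "v \<in> M" for v
  proof -
    obtain w where w: "w \<in> V" "v = (\<lambda>t. \<Sum>s\<in>I. P t s * w s)" using \<open>v \<in> M\<close> unfolding M by blast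
    show ?thesis unfolding w(2) phiM
      by (rule gsum[OF gr], rule gmult[OF gr stdeg]) (use w(1) V in auto)
  qed
  have psia: "\<forall>a\<in>Sig N. (\<lambda>t. \<psi> t * a) \<in> M \<and> \<phi> (\<lambda>t. \<psi> t * a) = a"
  proof
    fix a assume a: "a \<in> Sig N"
    have wV: "(\<lambda>s. \<psi> s * a) \<in> V" unfolding V using gmult[OF gr deg a] zero by auto
    have eq: "(\<lambda>t. \<Sum>s\<in>I. P t s * (\<psi> s * a)) = (\<lambda>t. \<psi> t * a)"
    proof
      fix t
      have "(\<Sum>s\<in>I. P t s * (\<psi> s * a)) = \<psi> t * (\<Sum>s\<in>I. st (\<psi> s) * \<psi> s) * a"
        unfolding Pdef by (simp add: sum_distrib_left sum_distrib_right mult.assoc)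
      then show "(\<Sum>s\<in>I. P t s * (\<psi> s * a)) = \<psi> t * a" unfolding unit by simp
    qed
    have "(\<lambda>t. \<psi> t * a) \<in> M" unfolding M
      by (intro CollectI exI[of _ "\<lambda>s. \<psi> s * a"] conjI) (use wV eq in auto)
    moreover have "\<phi> (\<lambda>t. \<psi> t * a) = a"
    proof -
      have "\<phi> (\<lambda>t. \<psi> t * a) = (\<Sum>t\<in>I. st (\<psi> t) * \<psi> t) * a"
        unfolding phi by (simp add: sum_distrib_right mult.assoc)
      then show ?thesis unfolding unit by simp
    qed
    ultimately show "(\<lambda>t. \<psi> t * a) \<in> M \<and> \<phi> (\<lambda>t. \<psi> t * a) = a" by blast
  qed
  have bij: "bij_betw \<phi> M (Sig N)"
    unfolding bij_betw_def
  proof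
    show "inj_on \<phi> M"
    proof (rule inj_onI)
      fix v w assume "v \<in> M" "w \<in> M" "\<phi> v = \<phi> w"
      then show "v = w" using recon' by metis
    qed
    show "\<phi> ` M = Sig N"
    proof
      show "\<phi> ` M \<subseteq> Sig N" using phimem by blast
      show "Sig N \<subseteq> \<phi> ` M"
      proof
        fix a assume "a \<in> Sig N"
        then show "a \<in> \<phi> ` M" using psia by (metis image_eqI)
      qed
    qed
  qed
  have addM: "\<forall>v\<in>M. \<forall>w\<in>M. (\<lambda>t. v t + w t) \<in> M \<and> \<phi> (\<lambda>t. v t + w t) = \<phi> v + \<phi> w"
  proof (intro ballI conjI)
    fix v w assume v: "v \<in> M" and w: "w \<in> M"
    obtain w1 where w1: "w1 \<in> V" "v = (\<lambda>t. \<Sum>s\<in>I. P t s * w1 s)" using v unfolding M by blast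
    obtain w2 where w2: "w2 \<in> V" "w = (\<lambda>t. \<Sum>s\<in>I. P t s * w2 s)" using w unfolding M by blast
    have "(\<lambda>s. w1 s + w2 s) \<in> V" using w1(1) w2(1) unfolding V by (auto intro: gadd[OF gr])
    moreover have "(\<lambda>t. v t + w t) = (\<lambda>t. \<Sum>s\<in>I. P t s * (w1 s + w2 s))"
      unfolding w1(2) w2(2) by (simp add: distrib_left sum.distrib)
    ultimately show "(\<lambda>t. v t + w t) \<in> M" unfolding M
      by (intro CollectI exI[of _ "\<lambda>s. w1 s + w2 s"] conjI) auto
    show "\<phi> (\<lambda>t. v t + w t) = \<phi> v + \<phi> w" unfolding phi by (simp add: distrib_left sum.distrib)
  qed
  have mulM: "\<forall>v\<in>M. \<forall>b\<in>Sig 0. (\<lambda>t. v t * b) \<in> M \<and> \<phi> (\<lambda>t. v t * b) = \<phi> v * b"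
  proof (intro ballI conjI)
    fix v b assume v: "v \<in> M" and b: "b \<in> Sig 0"
    obtain w1 where w1: "w1 \<in> V" "v = (\<lambda>t. \<Sum>s\<in>I. P t s * w1 s)" using v unfolding M by blast
    have "(\<lambda>s. w1 s * b) \<in> V" using w1(1) b unfolding V by (auto intro: gmult[OF gr])
    moreover have "(\<lambda>t. v t * b) = (\<lambda>t. \<Sum>s\<in>I. P t s * (w1 s * b))"
      unfolding w1(2) by (simp add: sum_distrib_right mult.assoc)
    ultimately show "(\<lambda>t. v t * b) \<in> M" unfolding M
      by (intro CollectI exI[of _ "\<lambda>s. w1 s * b"] conjI) auto
    show "\<phi> (\<lambda>t. v t * b) = \<phi> v * b" unfolding phi by (simp add: sum_distrib_right mult.assoc)
  qed
  show ?thesis using P0 proj sa bij addM mulM psia recon' by blast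
qed

lemma left_module:
  fixes st :: "'a::real_algebra_1 \<Rightarrow> 'a" and Sig :: "int \<Rightarrow> 'a set" and I :: "'b set"
    and u :: "'b \<Rightarrow> 'a" and P :: "'b \<Rightarrow> 'b \<Rightarrow> 'a"
  assumes star: "star_alg st" and gr: "Z_grading st Sig" and fin: "finite I"
    and unit: "(\<Sum>t\<in>I. st (u t) * u t) = 1"
    and deg: "\<And>t. u t \<in> Sig N" and zero: "\<And>t. t \<notin> I \<Longrightarrow> u t = 0"
    and Pdef: "\<And>t s. P t s = u t * st (u s)"
    and V: "V = {v. (\<forall>t\<in>I. v t \<in> Sig 0) \<and> (\<forall>t. t \<notin> I \<longrightarrow> v t = 0)}"
    and L: "L = {(\<lambda>s. \<Sum>t\<in>I. w t * P t s) | w. w \<in> V}"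
    and chi: "\<chi> = (\<lambda>v. \<Sum>t\<in>I. v t * u t)"
  shows
    "bij_betw \<chi> L (Sig N) \<and>
     (\<forall>v\<in>L. \<forall>w\<in>L. (\<lambda>t. v t + w t) \<in> L \<and> \<chi> (\<lambda>t. v t + w t) = \<chi> v + \<chi> w) \<and>
     (\<forall>v\<in>L. \<forall>b\<in>Sig 0. (\<lambda>t. b * v t) \<in> L \<and> \<chi> (\<lambda>t. b * v t) = b * \<chi> v) \<and>
     (\<forall>a\<in>Sig N. (\<lambda>t. a * st (u t)) \<in> L \<and> \<chi> (\<lambda>t. a * st (u t)) = a) \<and>
     (\<forall>v\<in>L. (\<lambda>t. \<chi> v * st (u t)) = v)"
proof -
  have stdeg: "\<And>t. st (u t) \<in> Sig (- N)" using gst[OF gr deg] by simp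
  have chiL: "\<chi> (\<lambda>s. \<Sum>t\<in>I. w t * P t s) = (\<Sum>t\<in>I. w t * u t)" for w
  proof -
    have "\<chi> (\<lambda>s. \<Sum>t\<in>I. w t * P t s) = (\<Sum>s\<in>I. \<Sum>t\<in>I. w t * u t * (st (u s) * u s))"
      unfolding chi Pdef by (simp add: sum_distrib_right mult.assoc)
    also have "\<dots> = (\<Sum>t\<in>I. \<Sum>s\<in>I. w t * u t * (st (u s) * u s))" by (rule sum.swap)
    also have "\<dots> = (\<Sum>t\<in>I. w t * u t * (\<Sum>s\<in>I. st (u s) * u s))" by (simp add: sum_distrib_left)
    also have "\<dots> = (\<Sum>t\<in>I. w t * u t)" unfolding unit by simp
    finally show ?thesis .
  qed
  have recon: "(\<lambda>s. \<chi> (\<lambda>s. \<Sum>t\<in>I. w t * P t s) * st (u s)) = (\<lambda>s. \<Sum>t\<in>I. w t * P t s)" for w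
    by (subst chiL) (simp add: Pdef sum_distrib_right mult.assoc)
  have recon': "\<forall>v\<in>L. (\<lambda>t. \<chi> v * st (u t)) = v" unfolding L using recon by blast
  have chimem: "\<chi> v \<in> Sig N" if "v \<in> L" for v
  proof -
    obtain w where w: "w \<in> V" "v = (\<lambda>s. \<Sum>t\<in>I. w t * P t s)" using \<open>v \<in> L\<close> unfolding L by blast
    show ?thesis unfolding w(2) chiL
      by (rule gsum[OF gr], rule gmult[OF gr _ deg]) (use w(1) V in auto)
  qed
  have psia: "\<forall>a\<in>Sig N. (\<lambda>t. a * st (u t)) \<in> L \<and> \<chi> (\<lambda>t. a * st (u t)) = a"
  proof
    fix a assume a: "a \<in> Sig N"
    have wV: "(\<lambda>s. a * st (u s)) \<in> V" unfolding V using gmult[OF gr a stdeg] zero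
      by (auto simp: st_zero_gen[OF star])
    have eq: "(\<lambda>s. \<Sum>t\<in>I. (a * st (u t)) * P t s) = (\<lambda>s. a * st (u s))"
    proof
      fix s
      have "(\<Sum>t\<in>I. (a * st (u t)) * P t s) = a * (\<Sum>t\<in>I. st (u t) * u t) * st (u s)"
        unfolding Pdef by (simp add: sum_distrib_left sum_distrib_right mult.assoc)
      then show "(\<Sum>t\<in>I. (a * st (u t)) * P t s) = a * st (u s)" unfolding unit by simp
    qed
    have "(\<lambda>t. a * st (u t)) \<in> L" unfolding L
      by (intro CollectI exI[of _ "\<lambda>s. a * st (u s)"] conjI) (use wV eq in auto)
    moreover have "\<chi> (\<lambda>t. a * st (u t)) = a"
    proof -
      have "\<chi> (\<lambda>t. a * st (u t)) = a * (\<Sum>t\<in>I. st (u t) * u t)"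
        unfolding chi by (simp add: sum_distrib_left mult.assoc)
      then show ?thesis unfolding unit by simp
    qed
    ultimately show "(\<lambda>t. a * st (u t)) \<in> L \<and> \<chi> (\<lambda>t. a * st (u t)) = a" by blast
  qed
  have bij: "bij_betw \<chi> L (Sig N)"
    unfolding bij_betw_def
  proof
    show "inj_on \<chi> L"
    proof (rule inj_onI)
      fix v w assume "v \<in> L" "w \<in> L" "\<chi> v = \<chi> w"
      then show "v = w" using recon' by metis
    qed
    show "\<chi> ` L = Sig N"
    proof
      show "\<chi> ` L \<subseteq> Sig N" using chimem by blast
      show "Sig N \<subseteq> \<chi> ` L"
      proof
        fix a assume "a \<in> Sig N"
        then show "a \<in> \<chi> ` L" using psia by (metis image_eqI)
      qed
    qed
  qed
  have addL: "\<forall>v\<in>L. \<forall>w\<in>L. (\<lambda>t. v t + w t) \<in> L \<and> \<chi> (\<lambda>t. v t + w t) = \<chi> v + \<chi> w"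
  proof (intro ballI conjI)
    fix v w assume v: "v \<in> L" and w: "w \<in> L"
    obtain w1 where w1: "w1 \<in> V" "v = (\<lambda>s. \<Sum>t\<in>I. w1 t * P t s)" using v unfolding L by blast
    obtain w2 where w2: "w2 \<in> V" "w = (\<lambda>s. \<Sum>t\<in>I. w2 t * P t s)" using w unfolding L by blast
    have "(\<lambda>s. w1 s + w2 s) \<in> V" using w1(1) w2(1) unfolding V by (auto intro: gadd[OF gr])
    moreover have "(\<lambda>t. v t + w t) = (\<lambda>s. \<Sum>t\<in>I. (w1 t + w2 t) * P t s)"
      unfolding w1(2) w2(2) by (simp add: distrib_right sum.distrib)
    ultimately show "(\<lambda>t. v t + w t) \<in> L" unfolding L
      by (intro CollectI exI[of _ "\<lambda>s. w1 s + w2 s"] conjI) auto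
    show "\<chi> (\<lambda>t. v t + w t) = \<chi> v + \<chi> w" unfolding chi by (simp add: distrib_right sum.distrib)
  qed
  have mulL: "\<forall>v\<in>L. \<forall>b\<in>Sig 0. (\<lambda>t. b * v t) \<in> L \<and> \<chi> (\<lambda>t. b * v t) = b * \<chi> v"
  proof (intro ballI conjI)
    fix v b assume v: "v \<in> L" and b: "b \<in> Sig 0"
    obtain w1 where w1: "w1 \<in> V" "v = (\<lambda>s. \<Sum>t\<in>I. w1 t * P t s)" using v unfolding L by blast
    have "(\<lambda>s. b * w1 s) \<in> V" using w1(1) b unfolding V by (auto intro: gmult[OF gr])
    moreover have "(\<lambda>t. b * v t) = (\<lambda>s. \<Sum>t\<in>I. (b * w1 t) * P t s)"
      unfolding w1(2) by (simp add: sum_distrib_left mult.assoc)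
    ultimately show "(\<lambda>t. b * v t) \<in> L" unfolding L
      by (intro CollectI exI[of _ "\<lambda>s. b * w1 s"] conjI) auto
    show "\<chi> (\<lambda>t. b * v t) = b * \<chi> v" unfolding chi by (simp add: sum_distrib_left mult.assoc)
  qed
  show ?thesis using bij addL mulL psia recon' by blast
qed




context S5 begin

lemma psi_unit: "(\<Sum>t\<in>idx N. st (psi q st z N t) * psi q st z N t) = 1"
proof -
  let ?n = "nat \<bar>N\<bar>"
  have "(\<Sum>t\<in>idx N. st (psi q st z N t) * psi q st z N t)
      = (\<Sum>t\<in>idxn ?n. psi_star q st z N t * st (psi_star q st z N t))"
    unfolding idx_idxn by (rule sum.cong) (auto simp: psi_def idx_idxn)
  also have "\<dots> = 1"
  proof (cases "N \<ge> 0")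
    case True
    have "(\<Sum>t\<in>idxn ?n. psi_star q st z N t * st (psi_star q st z N t))
       = (\<Sum>t\<in>idxn ?n. (case t of (j,k,l) \<Rightarrow> qtri q j k l *\<^sub>R (mo j k l * st (mo j k l))))"
    proof (rule sum.cong[OF refl])
      fix t assume "t \<in> idxn ?n"
      obtain j k l where t: "t = (j,k,l)" by (cases t) auto
      have s: "sqrt (qtri q j k l) * sqrt (qtri q j k l) = qtri q j k l"
        using qtri_pos[OF q0 q1, of j k l] by simp
      show "psi_star q st z N t * st (psi_star q st z N t) = (case t of (j,k,l) \<Rightarrow> qtri q j k l *\<^sub>R (mo j k l * st (mo j k l)))"
        unfolding t psi_star_def zmono_mo using True s by (simp add: st_scaleR)
    qed
    also have "\<dots> = 1" by (rule A_id)
    finally show ?thesis .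
  next
    case False
    have "(\<Sum>t\<in>idxn ?n. psi_star q st z N t * st (psi_star q st z N t))
       = (\<Sum>t\<in>idxn ?n. (case t of (j,k,l) \<Rightarrow> (q ^ (2 * (2 * j + k)) * qtri q j k l) *\<^sub>R (st (mo j k l) * mo j k l)))"
    proof (rule sum.cong[OF refl])
      fix t assume "t \<in> idxn ?n"
      then obtain j k l where t: "t = (j,k,l)" "j + k + l = ?n" by (cases t) (auto simp: mem_idxn)
      have s: "sqrt (qtri q j k l) * sqrt (qtri q j k l) = qtri q j k l"
        using qtri_pos[OF q0 q1, of j k l] by simp
      have e: "- N + int j - int l = int (2 * j + k)" using t(2) False by simp
      have p: "q powi (- N + int j - int l) = q ^ (2 * j + k)" unfolding e by (rule power_int_of_nat)
      have c: "(q powi (- N + int j - int l) * sqrt (qtri q j k l)) * (q powi (- N + int j - int l) * sqrt (qtri q j k l))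
          = q ^ (2 * (2 * j + k)) * qtri q j k l"
      proof -
        have pp: "q ^ (2 * (2 * j + k)) = q ^ (2 * j + k) * q ^ (2 * j + k)" by (simp only: mult_2 power_add)
        have "(q ^ (2 * j + k) * sqrt (qtri q j k l)) * (q ^ (2 * j + k) * sqrt (qtri q j k l))
            = (q ^ (2 * j + k) * q ^ (2 * j + k)) * (sqrt (qtri q j k l) * sqrt (qtri q j k l))"
          by (simp only: mult_ac)
        then show ?thesis unfolding p pp s .
      qed
      show "psi_star q st z N t * st (psi_star q st z N t) = (case t of (j,k,l) \<Rightarrow> (q ^ (2 * (2 * j + k)) * qtri q j k l) *\<^sub>R (st (mo j k l) * mo j k l))"
        unfolding t psi_star_def zmono_mo using False
        by (simp only: prod.case if_False st_scaleR st_st mult_scaleR_left mult_scaleR_right scaleR_scaleR c)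
    qed
    also have "\<dots> = 1" by (rule B_id)
    finally show ?thesis .
  qed
  finally show ?thesis .
qed

lemma psi_zero: "t \<notin> idx N \<Longrightarrow> psi q st z N t = 0" unfolding psi_def by simp

lemma mo_deg:
  assumes gr: "Z_grading st Sig" and zs: "\<forall>i\<in>{1,2,3}. z i \<in> Sig 1"
  shows "mo j k l \<in> Sig (int (j + k + l))"
  unfolding mo3_def
  by (rule gmult[OF gr gmult[OF gr gpow[OF gr] gpow[OF gr]] gpow[OF gr]]) (use zs in auto)

lemma psi_deg:
  assumes gr: "Z_grading st Sig" and zs: "\<forall>i\<in>{1,2,3}. z i \<in> Sig 1"
  shows "psi q st z N t \<in> Sig (- N)"
proof (cases "t \<in> idx N")
  case False then show ?thesis by (simp add: psi_zero g0[OF gr])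
next
  case True
  then obtain j k l where t: "t = (j,k,l)" "j + k + l = nat \<bar>N\<bar>" by (cases t) (auto simp: idx_def)
  have "psi_star q st z N t \<in> Sig N"
  proof (cases "N \<ge> 0")
    case True
    then show ?thesis unfolding t psi_star_def zmono_mo
      using gscale[OF gr mo_deg[OF gr zs, of j k l]] t(2) by simp
  next
    case False
    have "st (mo j k l) \<in> Sig N" by (rule gst[OF gr mo_deg[OF gr zs]]) (use t(2) False in simp)
    then show ?thesis unfolding t psi_star_def zmono_mo using False gscale[OF gr] by simp
  qed
  then show ?thesis unfolding psi_def using True gst[OF gr] by simp
qed

end

theorem proposition3p2:
  fixes q :: real and st :: "'a::real_algebra_1 \<Rightarrow> 'a" and z :: "nat \<Rightarrow> 'a"
    and Sig :: "int \<Rightarrow> 'a set" and N :: int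
  assumes "0 < q" and "q < 1"
    and "star_alg st" and "S5q_rels q st z" and "Z_grading st Sig"
    and "\<forall>i\<in>{1,2,3}. z i \<in> Sig 1"
  defines "\<Psi> \<equiv> psi q st z N" and "P \<equiv> Pmat q st z N"
    and "\<Psi>' \<equiv> psi q st z (- N)" and "P' \<equiv> Pmat q st z (- N)"
    and "M \<equiv> {(\<lambda>t. \<Sum>s\<in>idx N. Pmat q st z N t s * w s) | w. w \<in> vecs Sig N}"
    and "\<phi> \<equiv> (\<lambda>v. \<Sum>t\<in>idx N. st (psi q st z N t) * v t)"
    and "L \<equiv> {(\<lambda>s. \<Sum>t\<in>idx (- N). w t * Pmat q st z (- N) t s) | w. w \<in> vecs Sig (- N)}"
    and "\<chi> \<equiv> (\<lambda>v. \<Sum>t\<in>idx (- N). v t * psi q st z (- N) t)"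
  shows
    "card (idx N) = dN N \<and>
     (\<Sum>t\<in>idx N. st (\<Psi> t) * \<Psi> t) = 1 \<and>
     (\<forall>t\<in>idx N. \<forall>s\<in>idx N. P t s \<in> Sig 0) \<and>
     (\<forall>t\<in>idx N. \<forall>s\<in>idx N. (\<Sum>u\<in>idx N. P t u * P u s) = P t s) \<and>
     (\<forall>t\<in>idx N. \<forall>s\<in>idx N. st (P s t) = P t s) \<and>
     bij_betw \<phi> M (Sig N) \<and>
     (\<forall>v\<in>M. \<forall>w\<in>M. (\<lambda>t. v t + w t) \<in> M \<and> \<phi> (\<lambda>t. v t + w t) = \<phi> v + \<phi> w) \<and>
     (\<forall>v\<in>M. \<forall>b\<in>Sig 0. (\<lambda>t. v t * b) \<in> M \<and> \<phi> (\<lambda>t. v t * b) = \<phi> v * b) \<and>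
     (\<forall>a\<in>Sig N. (\<lambda>t. \<Psi> t * a) \<in> M \<and> \<phi> (\<lambda>t. \<Psi> t * a) = a) \<and>
     (\<forall>v\<in>M. (\<lambda>t. \<Psi> t * \<phi> v) = v) \<and>
     bij_betw \<chi> L (Sig N) \<and>
     (\<forall>v\<in>L. \<forall>w\<in>L. (\<lambda>t. v t + w t) \<in> L \<and> \<chi> (\<lambda>t. v t + w t) = \<chi> v + \<chi> w) \<and>
     (\<forall>v\<in>L. \<forall>b\<in>Sig 0. (\<lambda>t. b * v t) \<in> L \<and> \<chi> (\<lambda>t. b * v t) = b * \<chi> v) \<and>
     (\<forall>a\<in>Sig N. (\<lambda>t. a * st (\<Psi>' t)) \<in> L \<and> \<chi> (\<lambda>t. a * st (\<Psi>' t)) = a) \<and>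
     (\<forall>v\<in>L. (\<lambda>t. \<chi> v * st (\<Psi>' t)) = v)"
proof -
  interpret S: S5 q st z using assms(1-4) by unfold_locales
  have card: "card (idx N) = dN N" unfolding idx_idxn card_idxn dN_def by simp
  have fin: "\<And>N. finite (idx N)" unfolding idx_idxn by (rule finite_idxn)
  have R: "(\<forall>t\<in>idx N. \<forall>s\<in>idx N. P t s \<in> Sig 0) \<and>
     (\<forall>t\<in>idx N. \<forall>s\<in>idx N. (\<Sum>u\<in>idx N. P t u * P u s) = P t s) \<and>
     (\<forall>t\<in>idx N. \<forall>s\<in>idx N. st (P s t) = P t s) \<and>
     bij_betw \<phi> M (Sig N) \<and>
     (\<forall>v\<in>M. \<forall>w\<in>M. (\<lambda>t. v t + w t) \<in> M \<and> \<phi> (\<lambda>t. v t + w t) = \<phi> v + \<phi> w) \<and>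
     (\<forall>v\<in>M. \<forall>b\<in>Sig 0. (\<lambda>t. v t * b) \<in> M \<and> \<phi> (\<lambda>t. v t * b) = \<phi> v * b) \<and>
     (\<forall>a\<in>Sig N. (\<lambda>t. \<Psi> t * a) \<in> M \<and> \<phi> (\<lambda>t. \<Psi> t * a) = a) \<and>
     (\<forall>v\<in>M. (\<lambda>t. \<Psi> t * \<phi> v) = v)"
    unfolding \<Psi>_def P_def
  proof (rule right_module[OF assms(3,5) fin])
    show "(\<Sum>t\<in>idx N. st (psi q st z N t) * psi q st z N t) = 1" by (rule S.psi_unit)
    show "\<And>t. psi q st z N t \<in> Sig (- N)" by (rule S.psi_deg[OF assms(5,6)])
    show "\<And>t. t \<notin> idx N \<Longrightarrow> psi q st z N t = 0" by (rule S.psi_zero)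
    show "\<And>t s. Pmat q st z N t s = psi q st z N t * st (psi q st z N s)" by (simp add: Pmat_def)
    show "vecs Sig N = {v. (\<forall>t\<in>idx N. v t \<in> Sig 0) \<and> (\<forall>t. t \<notin> idx N \<longrightarrow> v t = 0)}" by (simp add: vecs_def)
    show "M = {(\<lambda>t. \<Sum>s\<in>idx N. Pmat q st z N t s * w s) | w. w \<in> vecs Sig N}" by (simp add: M_def)
    show "\<phi> = (\<lambda>v. \<Sum>t\<in>idx N. st (psi q st z N t) * v t)" by (simp add: \<phi>_def)
  qed
  have Lr: "bij_betw \<chi> L (Sig N) \<and>
     (\<forall>v\<in>L. \<forall>w\<in>L. (\<lambda>t. v t + w t) \<in> L \<and> \<chi> (\<lambda>t. v t + w t) = \<chi> v + \<chi> w) \<and>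
     (\<forall>v\<in>L. \<forall>b\<in>Sig 0. (\<lambda>t. b * v t) \<in> L \<and> \<chi> (\<lambda>t. b * v t) = b * \<chi> v) \<and>
     (\<forall>a\<in>Sig N. (\<lambda>t. a * st (\<Psi>' t)) \<in> L \<and> \<chi> (\<lambda>t. a * st (\<Psi>' t)) = a) \<and>
     (\<forall>v\<in>L. (\<lambda>t. \<chi> v * st (\<Psi>' t)) = v)"
    unfolding \<Psi>'_def
  proof (rule left_module[OF assms(3,5) fin])
    show "(\<Sum>t\<in>idx (- N). st (psi q st z (- N) t) * psi q st z (- N) t) = 1" by (rule S.psi_unit)
    show "\<And>t. psi q st z (- N) t \<in> Sig N" using S.psi_deg[OF assms(5,6), of "- N"] by simp
    show "\<And>t. t \<notin> idx (- N) \<Longrightarrow> psi q st z (- N) t = 0" by (rule S.psi_zero)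
    show "\<And>t s. Pmat q st z (- N) t s = psi q st z (- N) t * st (psi q st z (- N) s)" by (simp add: Pmat_def)
    show "vecs Sig (- N) = {v. (\<forall>t\<in>idx (- N). v t \<in> Sig 0) \<and> (\<forall>t. t \<notin> idx (- N) \<longrightarrow> v t = 0)}" by (simp add: vecs_def)
    show "L = {(\<lambda>s. \<Sum>t\<in>idx (- N). w t * Pmat q st z (- N) t s) | w. w \<in> vecs Sig (- N)}" by (simp add: L_def)
    show "\<chi> = (\<lambda>v. \<Sum>t\<in>idx (- N). v t * psi q st z (- N) t)" by (simp add: \<chi>_def)
  qed
  have U: "(\<Sum>t\<in>idx N. st (\<Psi> t) * \<Psi> t) = 1" unfolding \<Psi>_def by (rule S.psi_unit)
  show ?thesis using card U R Lr by blast
qed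



end
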